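(* Let $\mathfrak l$ be a real finite-dimensional nilpotent Lie algebra with $\dim\mathfrak l'=2$ and $\mathfrak l'\subset\mathfrak z(\mathfrak l)$, having a basis $X_1,\dots,X_n,Y,Z$ ($n\ge4$) with $[X_1,X_2]=Y$, $[X_1,X_3]=Z$, $[X_2,X_3]=0$, $[X_1,X_4]=0$, $[X_2,X_4]=Z$, and $[X_1,X_j]=[X_2,X_j]=0$ for $j\ge5$. Let $\mathfrak a$ be a semisimple orthogonal $\mathfrak l$-module and $[\alpha,\gamma]\in\mathcal H^2_Q(\mathfrak l,\mathfrak a)$ admissible, represented with $\alpha(\mathfrak l,\mathfrak l)\subset\mathfrak a^{\mathfrak l}$. Then $\alpha([X_3,X_j],\cdot)=0$ for all $j\ge5$.
   Context: For a Lie algebra $\mathfrak l$: $\mathfrak l^1=\mathfrak l$, $\mathfrak l^{k+1}=[\mathfrak l,\mathfrak l^k]$, $\mathfrak l'=\mathfrak l^2$, $\mathfrak z(\mathfrak l)$ the centre. An orthogonal $\mathfrak l$-module $(\rho,\mathfrak a)$ is a finite-dimensional real vector space with a nondegenerate symmetric bilinear form $\langle\cdot,\cdot\rangle_{\mathfrak a}$ and a representation by skew-adjoint maps; $\mathfrak a^{\mathfrak l}$ its invariants. $C^p(\mathfrak l,\mathfrak a)$: alternating $p$-linear maps with Chevalley–Eilenberg differential $d$; $C^p(\mathfrak l)=C^p(\mathfrak l,\mathbb R)$; $\langle\alpha\wedge\beta\rangle$ is the wedge product followed by contraction with $\langle\cdot,\cdot\rangle_{\mathfrak a}$. $\mathcal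 Z^2_Q(\mathfrak l,\mathfrak a)=\{(\alpha,\gamma)\in C^2(\mathfrak l,\mathfrak a)\oplus C^3(\mathfrak l): d\alpha=0,d\gamma=\frac12\langle\alpha\wedge\alpha\rangle\}$; the group $C^1(\mathfrak l,\mathfrak a)\oplus C^2(\mathfrak l)$ with $(\tau_1,\sigma_1)*(\tau_2,\sigma_2)=(\tau_1+\tau_2,\sigma_1+\sigma_2+\frac12\langle\tau_1\wedge\tau_2\rangle)$ acts by $(\alpha,\gamma)(\tau,\sigma)=(\alpha+d\tau,\gamma+d\sigma+\langle(\alpha+\frac12d\tau)\wedge\tau\rangle)$; $\mathcal H^2_Q(\mathfrak l,\mathfrak a)$ is the orbit set. Admissibility: with $\mathfrak l^{m+2}=0$, $\mathfrak l_{(0)}=\mathfrak z(\mathfrak l)\cap\ker\rho$, $\mathfrak l_{(k)}=\mathfrak z(\mathfrak l)\cap\mathfrak l^{k+1}$ ($k\ge1$), and a representative with $\alpha(\mathfrak l,\mathfrak l)\subset\mathfrak a^{\mathfrak l}$, the class is admissible iff for all $0\le k\le m$: $(A_k)$ whenever $L_0\in\mathfrak l_{(k)}$ and there are $A_0\in\mathfrak a$, $Z_0\in(\mathfrak l^{k+1})^*$ with $\alpha(L,L_0)=0$ and $\gamma(L,L_0,\cdot)=-\langle A_0,\alpha(L,\cdot)\rangle_{\mathfrak a}+\langle Z_0,[L,\cdot]\rangle$ on $\mathfrak l^{k+1}$ for all $L$, then $L_0=0$; $(B_k)$ $\alpha$ applied to the kernel of the bracket map $\mathfrak l\otimes\mathfrak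 l^{k+1}\to\mathfrak l$ is a nondegenerate subspace of $\mathfrak a$. *)

theory Defs
  imports Main "HOL.Real_Vector_Spaces"
begin

definition lie_algebra :: "('l::real_vector \<Rightarrow> 'l \<Rightarrow> 'l) \<Rightarrow> bool" where
  "lie_algebra br \<longleftrightarrow>
     (\<forall>x. linear (br x)) \<and> (\<forall>y. linear (\<lambda>x. br x y)) \<and>
     (\<forall>x. br x x = 0) \<and>
     (\<forall>x y z. br x (br y z) + br y (br z x) + br z (br x y) = 0)"

text \<open>Lower central series: lcs br 1 = l, lcs br (k+1) = [l, lcs br k]
  (linear span of brackets). The index 0 is unused and set to l.\<close>
fun lcs :: "('l::real_vector \<Rightarrow> 'l \<Rightarrow> 'l) \<Rightarrow> nat \<Rightarrow> 'l set" where
  "lcs br 0 = UNIV"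
| "lcs br (Suc 0) = UNIV"
| "lcs br (Suc (Suc k)) = span {br x y | x y. y \<in> lcs br (Suc k)}"

definition nilpotent_lie :: "('l::real_vector \<Rightarrow> 'l \<Rightarrow> 'l) \<Rightarrow> bool" where
  "nilpotent_lie br \<longleftrightarrow> (\<exists>k. lcs br k = {0})"

definition centre :: "('l::real_vector \<Rightarrow> 'l \<Rightarrow> 'l) \<Rightarrow> 'l set" where
  "centre br = {z. \<forall>x. br x z = 0}"

definition finite_dim :: "'v::real_vector itself \<Rightarrow> bool" where
  "finite_dim _ \<longleftrightarrow> (\<exists>S::'v set. finite S \<and> span S = UNIV)"

definition orthogonal_module ::
  "('l::real_vector \<Rightarrow> 'l \<Rightarrow> 'l) \<Rightarrow> ('l \<Rightarrow> 'v::real_vector \<Rightarrow> 'v) \<Rightarrow> ('v \<Rightarrow> 'v \<Rightarrow> real) \<Rightarrow> bool" where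
  "orthogonal_module br rho B \<longleftrightarrow>
     finite_dim TYPE('v) \<and>
     (\<forall>u. linear (B u)) \<and> (\<forall>u v. B u v = B v u) \<and>
     (\<forall>u. (\<forall>v. B u v = 0) \<longrightarrow> u = 0) \<and>
     (\<forall>x. linear (rho x)) \<and> (\<forall>u. linear (\<lambda>x. rho x u)) \<and>
     (\<forall>x y u. rho (br x y) u = rho x (rho y u) - rho y (rho x u)) \<and>
     (\<forall>x u v. B (rho x u) v + B u (rho x v) = 0)"

definition invariant_subspace :: "('l \<Rightarrow> 'v::real_vector \<Rightarrow> 'v) \<Rightarrow> 'v set \<Rightarrow> bool" where
  "invariant_subspace rho U \<longleftrightarrow> subspace U \<and> (\<forall>x. \<forall>u\<in>U. rho x u \<in> U)"

text \<open>Semisimple = completely reducible: every submodule has a complementary submodule.\<close>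
definition semisimple_module :: "('l \<Rightarrow> 'v::real_vector \<Rightarrow> 'v) \<Rightarrow> bool" where
  "semisimple_module rho \<longleftrightarrow>
     (\<forall>U. invariant_subspace rho U \<longrightarrow>
        (\<exists>W. invariant_subspace rho W \<and> U \<inter> W = {0} \<and> {u + w | u w. u \<in> U \<and> w \<in> W} = UNIV))"

definition invariants :: "('l \<Rightarrow> 'v::real_vector \<Rightarrow> 'v) \<Rightarrow> 'v set" where
  "invariants rho = {u. \<forall>x. rho x u = 0}"

definition cochain2 :: "('l::real_vector \<Rightarrow> 'l \<Rightarrow> 'v::real_vector) \<Rightarrow> bool" where
  "cochain2 \<alpha> \<longleftrightarrow> (\<forall>x. linear (\<alpha> x)) \<and> (\<forall>y. linear (\<lambda>x. \<alpha> x y)) \<and> (\<forall>x. \<alpha> x x = 0)"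

definition cochain3 :: "('l::real_vector \<Rightarrow> 'l \<Rightarrow> 'l \<Rightarrow> real) \<Rightarrow> bool" where
  "cochain3 \<gamma> \<longleftrightarrow> (\<forall>x y. linear (\<gamma> x y)) \<and> (\<forall>x z. linear (\<lambda>y. \<gamma> x y z)) \<and>
     (\<forall>y z. linear (\<lambda>x. \<gamma> x y z)) \<and>
     (\<forall>x y. \<gamma> x x y = 0) \<and> (\<forall>x y. \<gamma> x y y = 0) \<and> (\<forall>x y. \<gamma> x y x = 0)"

definition d2 :: "('l::real_vector \<Rightarrow> 'l \<Rightarrow> 'l) \<Rightarrow> ('l \<Rightarrow> 'v::real_vector \<Rightarrow> 'v) \<Rightarrow>
    ('l \<Rightarrow> 'l \<Rightarrow> 'v) \<Rightarrow> 'l \<Rightarrow> 'l \<Rightarrow> 'l \<Rightarrow> 'v" where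
  "d2 br rho \<alpha> x y z =
     rho x (\<alpha> y z) - rho y (\<alpha> x z) + rho z (\<alpha> x y)
     - \<alpha> (br x y) z + \<alpha> (br x z) y - \<alpha> (br y z) x"

definition d3 :: "('l::real_vector \<Rightarrow> 'l \<Rightarrow> 'l) \<Rightarrow> ('l \<Rightarrow> 'l \<Rightarrow> 'l \<Rightarrow> real) \<Rightarrow>
    'l \<Rightarrow> 'l \<Rightarrow> 'l \<Rightarrow> 'l \<Rightarrow> real" where
  "d3 br \<gamma> x1 x2 x3 x4 =
     - \<gamma> (br x1 x2) x3 x4 + \<gamma> (br x1 x3) x2 x4 - \<gamma> (br x1 x4) x2 x3
     - \<gamma> (br x2 x3) x1 x4 + \<gamma> (br x2 x4) x1 x3 - \<gamma> (br x3 x4) x1 x2"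

text \<open>\<langle>\<alpha> \<and> \<beta>\<rangle> for 2-cochains: sum over (2,2)-shuffles with signs, contracted with B.\<close>
definition wedge_contr :: "('v \<Rightarrow> 'v \<Rightarrow> real) \<Rightarrow> ('l \<Rightarrow> 'l \<Rightarrow> 'v) \<Rightarrow> ('l \<Rightarrow> 'l \<Rightarrow> 'v) \<Rightarrow>
    'l \<Rightarrow> 'l \<Rightarrow> 'l \<Rightarrow> 'l \<Rightarrow> real" where
  "wedge_contr B \<alpha> \<beta> x1 x2 x3 x4 =
     B (\<alpha> x1 x2) (\<beta> x3 x4) - B (\<alpha> x1 x3) (\<beta> x2 x4) + B (\<alpha> x1 x4) (\<beta> x2 x3)
     + B (\<alpha> x2 x3) (\<beta> x1 x4) - B (\<alpha> x2 x4) (\<beta> x1 x3) + B (\<alpha> x3 x4) (\<beta> x1 x2)"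

definition quad_cocycle ::
  "('l::real_vector \<Rightarrow> 'l \<Rightarrow> 'l) \<Rightarrow> ('l \<Rightarrow> 'v::real_vector \<Rightarrow> 'v) \<Rightarrow> ('v \<Rightarrow> 'v \<Rightarrow> real) \<Rightarrow>
    ('l \<Rightarrow> 'l \<Rightarrow> 'v) \<Rightarrow> ('l \<Rightarrow> 'l \<Rightarrow> 'l \<Rightarrow> real) \<Rightarrow> bool" where
  "quad_cocycle br rho B \<alpha> \<gamma> \<longleftrightarrow>
     cochain2 \<alpha> \<and> cochain3 \<gamma> \<and>
     (\<forall>x y z. d2 br rho \<alpha> x y z = 0) \<and>
     (\<forall>x1 x2 x3 x4. d3 br \<gamma> x1 x2 x3 x4 = (1/2) * wedge_contr B \<alpha> \<alpha> x1 x2 x3 x4)"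

definition linear_on :: "'l::real_vector set \<Rightarrow> ('l \<Rightarrow> real) \<Rightarrow> bool" where
  "linear_on S f \<longleftrightarrow> (\<forall>x\<in>S. \<forall>y\<in>S. f (x + y) = f x + f y) \<and> (\<forall>c. \<forall>x\<in>S. f (c *\<^sub>R x) = c * f x)"

definition lsub :: "('l::real_vector \<Rightarrow> 'l \<Rightarrow> 'l) \<Rightarrow> ('l \<Rightarrow> 'v::real_vector \<Rightarrow> 'v) \<Rightarrow> nat \<Rightarrow> 'l set" where
  "lsub br rho k = (if k = 0 then centre br \<inter> {x. \<forall>u. rho x u = 0}
                    else centre br \<inter> lcs br (k + 1))"

definition condA ::
  "('l::real_vector \<Rightarrow> 'l \<Rightarrow> 'l) \<Rightarrow> ('l \<Rightarrow> 'v::real_vector \<Rightarrow> 'v) \<Rightarrow> ('v \<Rightarrow> 'v \<Rightarrow> real) \<Rightarrow>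
    ('l \<Rightarrow> 'l \<Rightarrow> 'v) \<Rightarrow> ('l \<Rightarrow> 'l \<Rightarrow> 'l \<Rightarrow> real) \<Rightarrow> nat \<Rightarrow> bool" where
  "condA br rho B \<alpha> \<gamma> k \<longleftrightarrow>
     (\<forall>L0\<in>lsub br rho k.
        (\<exists>A0 Z0. linear_on (lcs br (k + 1)) Z0 \<and>
           (\<forall>L. \<alpha> L L0 = 0) \<and>
           (\<forall>L. \<forall>M\<in>lcs br (k + 1). \<gamma> L L0 M = - B A0 (\<alpha> L M) + Z0 (br L M)))
        \<longrightarrow> L0 = 0)"

definition nondeg_subspace :: "('v::zero \<Rightarrow> 'v \<Rightarrow> real) \<Rightarrow> 'v set \<Rightarrow> bool" where
  "nondeg_subspace B V \<longleftrightarrow> (\<forall>v\<in>V. (\<forall>w\<in>V. B v w = 0) \<longrightarrow> v = 0)"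

text \<open>alpha applied to the kernel of the bracket map l \<otimes> l^{k+1} \<rightarrow> l, with tensors
  written as finite sums of pure tensors (lists of pairs).\<close>
definition alpha_ker :: "('l::real_vector \<Rightarrow> 'l \<Rightarrow> 'l) \<Rightarrow> ('l \<Rightarrow> 'l \<Rightarrow> 'v::real_vector) \<Rightarrow> nat \<Rightarrow> 'v set" where
  "alpha_ker br \<alpha> k =
     {sum_list (map (\<lambda>(L, M). \<alpha> L M) ps) | ps.
        (\<forall>(L, M)\<in>set ps. M \<in> lcs br (k + 1)) \<and> sum_list (map (\<lambda>(L, M). br L M) ps) = 0}"

definition condB :: "('l::real_vector \<Rightarrow> 'l \<Rightarrow> 'l) \<Rightarrow> ('v::real_vector \<Rightarrow> 'v \<Rightarrow> real) \<Rightarrow>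
    ('l \<Rightarrow> 'l \<Rightarrow> 'v) \<Rightarrow> nat \<Rightarrow> bool" where
  "condB br B \<alpha> k \<longleftrightarrow> nondeg_subspace B (alpha_ker br \<alpha> k)"

text \<open>Admissibility of the class of (alpha, gamma), for a representative with alpha(l,l) in a^l,
  where m is such that l^{m+2} = 0.\<close>
definition admissible ::
  "('l::real_vector \<Rightarrow> 'l \<Rightarrow> 'l) \<Rightarrow> ('l \<Rightarrow> 'v::real_vector \<Rightarrow> 'v) \<Rightarrow> ('v \<Rightarrow> 'v \<Rightarrow> real) \<Rightarrow>
    ('l \<Rightarrow> 'l \<Rightarrow> 'v) \<Rightarrow> ('l \<Rightarrow> 'l \<Rightarrow> 'l \<Rightarrow> real) \<Rightarrow> nat \<Rightarrow> bool" where
  "admissible br rho B \<alpha> \<gamma> m \<longleftrightarrow>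
     (\<forall>k\<le>m. condA br rho B \<alpha> \<gamma> k \<and> condB br B \<alpha> k)"

end

theory Submission
  imports Defs
begin

lemma lcs2_eq: "lcs br 2 = span {br x y | x y. True}"
  by (simp add: numeral_2_eq_2)

lemma br_in_lcs2: "br x y \<in> lcs br 2"
  unfolding lcs2_eq by (rule span_base) blast

lemma lin_facts:
  assumes "linear f"
  shows "f (x + y) = f x + f y" "f (- x) = - f x" "f 0 = 0" "f (x - y) = f x - f y"
    "f (c *\<^sub>R x) = c *\<^sub>R f x"
  using assms by (simp_all add: linear_add linear_neg linear_0 linear_diff linear_scale)

lemma two_dim_span:
  fixes V :: "'a::real_vector set"
  assumes "dim V = 2" "Y \<in> V" "Z \<in> V" "independent {Y, Z}" "Y \<noteq> Z" "w \<in> V"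
  shows "w \<in> span {Y, Z}"
proof (rule ccontr)
  assume nw: "w \<notin> span {Y, Z}"
  obtain A where A: "A \<subseteq> V" "independent A" "V \<subseteq> span A" "card A = dim V"
    by (rule basis_exists)
  then have fA: "finite A" using assms(1) by (metis card.infinite zero_neq_numeral)
  have ind: "independent (insert w {Y, Z})"
    using assms(4) nw independent_insert[of w "{Y,Z}"] by simp
  have "insert w {Y, Z} \<subseteq> span A" using A assms by auto
  then have "card (insert w {Y, Z}) \<le> card A"
    using independent_span_bound[OF fA ind] by auto
  moreover have "card (insert w {Y, Z}) = 3"
  proof -
    have "w \<noteq> Y" "w \<noteq> Z" using nw span_base[of _ "{Y,Z}"] by auto
    then show ?thesis using assms(5) by simp
  qed
  ultimately show False using A assms(1) by simp
qed

lemma span2_elim: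
  assumes "w \<in> span {Y, Z::'a::real_vector}"
  obtains a b where "w = a *\<^sub>R Y + b *\<^sub>R Z"
proof -
  from assms obtain k where "w - k *\<^sub>R Y \<in> span {Z}" by (auto simp: span_insert)
  then obtain b where "w - k *\<^sub>R Y = b *\<^sub>R Z" by (auto simp: span_singleton)
  then have "w = k *\<^sub>R Y + b *\<^sub>R Z" by (simp add: algebra_simps)
  then show ?thesis using that by blast
qed

lemma B_sum_list:
  assumes "linear (B v)" "\<forall>(L, M)\<in>set ps. B v (\<alpha> L M) = 0"
  shows "B v (sum_list (map (\<lambda>(L, M). \<alpha> L M) ps)) = 0"
  using assms(2)
proof (induction ps)
  case Nil then show ?case using lin_facts(3)[OF assms(1)] by simp
next
  case (Cons p ps) then show ?case using lin_facts(1)[OF assms(1)] by (cases p) auto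
qed

theorem lemma7:
  fixes br :: "'l::real_vector \<Rightarrow> 'l \<Rightarrow> 'l"
    and rho :: "'l \<Rightarrow> 'v::real_vector \<Rightarrow> 'v"
    and B :: "'v \<Rightarrow> 'v \<Rightarrow> real"
    and \<alpha> :: "'l \<Rightarrow> 'l \<Rightarrow> 'v"
    and \<gamma> :: "'l \<Rightarrow> 'l \<Rightarrow> 'l \<Rightarrow> real"
    and X :: "nat \<Rightarrow> 'l" and Y Z :: 'l
    and n m :: nat
  assumes lie: "lie_algebra br"
    and nilp: "nilpotent_lie br"
    and dim_der: "dim (lcs br 2) = 2"
    and der_central: "lcs br 2 \<subseteq> centre br"
    and n4: "n \<ge> 4"
    and basis_inj: "inj_on X {1..n}"
    and basis_Y: "Y \<notin> X ` {1..n}" and basis_Z: "Z \<notin> X ` {1..n}" and YZ: "Y \<noteq> Z"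
    and basis_indep: "independent (X ` {1..n} \<union> {Y, Z})"
    and basis_span: "span (X ` {1..n} \<union> {Y, Z}) = UNIV"
    and br12: "br (X 1) (X 2) = Y"
    and br13: "br (X 1) (X 3) = Z"
    and br23: "br (X 2) (X 3) = 0"
    and br14: "br (X 1) (X 4) = 0"
    and br24: "br (X 2) (X 4) = Z"
    and br_j: "\<forall>j\<in>{5..n}. br (X 1) (X j) = 0 \<and> br (X 2) (X j) = 0"
    and orth: "orthogonal_module br rho B"
    and ss: "semisimple_module rho"
    and cocycle: "quad_cocycle br rho B \<alpha> \<gamma>"
    and inv: "\<forall>x y. \<alpha> x y \<in> invariants rho"
    and m_nil: "lcs br (m + 2) = {0}"
    and adm: "admissible br rho B \<alpha> \<gamma> m"
  shows "\<forall>j\<in>{5..n}. \<forall>L. \<alpha> (br (X 3) (X j)) L = 0"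
proof -
  have brR: "linear (br x)" for x using lie by (simp add: lie_algebra_def)
  have brL: "linear (\<lambda>x. br x y)" for y using lie by (simp add: lie_algebra_def)
  have brxx: "br x x = 0" for x using lie by (simp add: lie_algebra_def)
  have br_anti: "br y x = - br x y" for x y
  proof -
    have "0 = br (x + y) (x + y)" by (simp add: brxx)
    also have "\<dots> = br x x + br x y + br y x + br y y"
      using lin_facts(1)[OF brR] lin_facts(1)[OF brL, of x y] by (simp add: algebra_simps)
    finally show ?thesis by (simp add: brxx eq_neg_iff_add_eq_0 add.commute)
  qed
  have c2: "cochain2 \<alpha>" and c3: "cochain3 \<gamma>"
    and dz: "\<And>x y z. d2 br rho \<alpha> x y z = 0"
    and dg: "\<And>x1 x2 x3 x4. d3 br \<gamma> x1 x2 x3 x4 = (1/2) * wedge_contr B \<alpha> \<alpha> x1 x2 x3 x4"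
    using cocycle by (auto simp: quad_cocycle_def)
  have aR: "linear (\<alpha> x)" for x using c2 by (simp add: cochain2_def)
  have aL: "linear (\<lambda>x. \<alpha> x y)" for y using c2 by (simp add: cochain2_def)
  have axx: "\<alpha> x x = 0" for x using c2 by (simp add: cochain2_def)
  have a_anti: "\<alpha> y x = - \<alpha> x y" for x y
  proof -
    have "0 = \<alpha> (x + y) (x + y)" by (simp add: axx)
    also have "\<dots> = \<alpha> x x + \<alpha> x y + \<alpha> y x + \<alpha> y y"
      using lin_facts(1)[OF aR] lin_facts(1)[OF aL, of x y] by (simp add: algebra_simps)
    finally show ?thesis by (simp add: axx eq_neg_iff_add_eq_0 add.commute)
  qed
  have a0: "\<alpha> 0 y = 0" for y using lin_facts(3)[OF aL[of y]] by simp
  have aadd: "\<alpha> (x + x') y = \<alpha> x y + \<alpha> x' y" for x x' y using lin_facts(1)[OF aL[of y]] by simp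
  have ascale: "\<alpha> (c *\<^sub>R x) y = c *\<^sub>R \<alpha> x y" for c x y using lin_facts(5)[OF aL[of y]] by simp
  have aneg: "\<alpha> (- x) y = - \<alpha> x y" for x y using lin_facts(2)[OF aL[of y]] by simp
  have g1: "linear (\<lambda>x. \<gamma> x y z)" for y z using c3 by (simp add: cochain3_def)
  have g2: "linear (\<lambda>y. \<gamma> x y z)" for x z using c3 by (simp add: cochain3_def)
  have g3: "linear (\<gamma> x y)" for x y using c3 by (simp add: cochain3_def)
  have galt: "\<gamma> x x y = 0" "\<gamma> x y y = 0" "\<gamma> x y x = 0" for x y using c3 by (simp_all add: cochain3_def)
  have g0: "\<gamma> 0 y z = 0" for y z using lin_facts(3)[OF g1[of y z]] by simp
  have Blin: "linear (B u)" for u using orth by (simp add: orthogonal_module_def)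
  have Bsym: "B u v = B v u" for u v using orth by (simp add: orthogonal_module_def)
  have B0: "B u 0 = 0" "B 0 u = 0" for u using lin_facts(3)[OF Blin[of u]] Bsym by metis+
  have Badd: "B u (v + w) = B u v + B u w" for u v w using lin_facts(1)[OF Blin] by simp
  have Bneg: "B u (- v) = - B u v" for u v using lin_facts(2)[OF Blin] by simp
  have Bscale: "B u (c *\<^sub>R v) = c * B u v" for u v c using lin_facts(5)[OF Blin] by simp
  have cyc: "\<alpha> (br x y) z - \<alpha> (br x z) y + \<alpha> (br y z) x = 0" for x y z
  proof -
    have "rho a (\<alpha> b c) = 0" for a b c using inv by (simp add: invariants_def)
    then show ?thesis using dz[of x y z] unfolding d2_def by (simp add: algebra_simps)
  qed
  have Y2: "Y \<in> lcs br 2" using br12 br_in_lcs2 by metis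
  have Z2: "Z \<in> lcs br 2" using br13 br_in_lcs2 by metis
  have indYZ: "independent {Y, Z}" using independent_mono[OF basis_indep] by auto
  have in_span: "w \<in> lcs br 2 \<Longrightarrow> w \<in> span {Y, Z}" for w
    using two_dim_span[OF dim_der Y2 Z2 indYZ YZ] by blast
  have cent: "w \<in> lcs br 2 \<Longrightarrow> br x w = 0 \<and> br w x = 0" for w x
    using der_central br_anti[of x w] by (auto simp: centre_def)
  have aYZ: "\<alpha> Y Z = 0"
    using cyc[of "X 1" "X 2" Z] br12 cent[OF Z2] a0 by simp
  have aLL: "\<alpha> c c' = 0" if H: "c \<in> lcs br 2" "c' \<in> lcs br 2" for c c'
  proof -
    obtain a b where c: "c = a *\<^sub>R Y + b *\<^sub>R Z" using in_span[OF H(1)] by (rule span2_elim)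
    obtain a' b' where c': "c' = a' *\<^sub>R Y + b' *\<^sub>R Z" using in_span[OF H(2)] by (rule span2_elim)
    have "\<alpha> Z Y = 0" using a_anti[of Z Y] aYZ by simp
    then show ?thesis unfolding c c' using aYZ
      by (simp add: aadd ascale lin_facts[OF aR] axx)
  qed
  have gLLL: "\<gamma> w c c' = 0" if H: "w \<in> lcs br 2" "c \<in> lcs br 2" "c' \<in> lcs br 2" for w c c'
  proof -
    obtain a b where c: "c = a *\<^sub>R Y + b *\<^sub>R Z" using in_span[OF H(2)] by (rule span2_elim)
    obtain a' b' where c': "c' = a' *\<^sub>R Y + b' *\<^sub>R Z" using in_span[OF H(3)] by (rule span2_elim)
    obtain a'' b'' where w: "w = a'' *\<^sub>R Y + b'' *\<^sub>R Z" using in_span[OF H(1)] by (rule span2_elim)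
    have e1: "\<gamma> (x + x') y z = \<gamma> x y z + \<gamma> x' y z" "\<gamma> (r *\<^sub>R x) y z = r * \<gamma> x y z"
      "\<gamma> y (x + x') z = \<gamma> y x z + \<gamma> y x' z" "\<gamma> y (r *\<^sub>R x) z = r * \<gamma> y x z"
      "\<gamma> y z (x + x') = \<gamma> y z x + \<gamma> y z x'" "\<gamma> y z (r *\<^sub>R x) = r * \<gamma> y z x" for x x' y z r
      using lin_facts(1,5)[OF g1] lin_facts(1,5)[OF g2] lin_facts(1,5)[OF g3] by auto
    show ?thesis unfolding c c' w
      by (simp add: e1 galt)
  qed
  have Sym: "B (\<alpha> c L) (\<alpha> c' L') = B (\<alpha> c L') (\<alpha> c' L)"
    if "c \<in> lcs br 2" "c' \<in> lcs br 2" for c c' L L'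
  proof -
    have "d3 br \<gamma> c L c' L' = 0"
      unfolding d3_def using cent[OF that(1)] cent[OF that(2)] g0
        gLLL[OF br_in_lcs2 that] by simp
    moreover have "wedge_contr B \<alpha> \<alpha> c L c' L' =
        2 * B (\<alpha> c L) (\<alpha> c' L') - 2 * B (\<alpha> c L') (\<alpha> c' L)"
    proof -
      have 1: "\<alpha> L c' = - \<alpha> c' L" by (rule a_anti)
      have 2: "B (- \<alpha> c' L) (\<alpha> c L') = - B (\<alpha> c L') (\<alpha> c' L)"
        using Bsym Bneg by metis
      have 3: "B (\<alpha> c' L') (\<alpha> c L) = B (\<alpha> c L) (\<alpha> c' L')" by (rule Bsym)
      show ?thesis unfolding wedge_contr_def aLL[OF that] B0 1 2 3 Bneg by simp
    qed
    ultimately show ?thesis using dg[of c L c' L'] by simp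
  qed
  have Bneg1: "B (- u) v = - B u v" for u v using Bsym Bneg by metis
  have Bdiff1: "B (u - u') v = B u v - B u' v" for u u' v
    using Bsym lin_facts(4)[OF Blin] by metis
  have Badd1: "B (u + u') v = B u v + B u' v" for u u' v
    using Bsym Badd by metis
  have Bscale1: "B (c *\<^sub>R u) v = c * B u v" for u v c using Bsym Bscale by metis
  have aRadd: "\<alpha> x (y + y') = \<alpha> x y + \<alpha> x y'" for x y y' using lin_facts(1)[OF aR] by simp
  have aRscale: "\<alpha> x (c *\<^sub>R y) = c *\<^sub>R \<alpha> x y" for x y c using lin_facts(5)[OF aR] by simp
  have m1: "1 \<le> m"
  proof (rule ccontr)
    assume "\<not> 1 \<le> m"
    then have "m = 0" by simp
    then have "m + 2 = 2" by simp
    then have "lcs br 2 = {0}" using m_nil by metis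
    then have "Y = 0" using Y2 by blast
    then show False using basis_indep dependent_zero by auto
  qed
  have cB: "condB br B \<alpha> 1" using adm m1 by (simp add: admissible_def)
  show ?thesis
  proof (intro ballI allI)
    fix j L assume j: "j \<in> {5..n}"
    define cj where "cj = br (X 3) (X j)"
    have cj2: "cj \<in> lcs br 2" using br_in_lcs2 cj_def by metis
    have bj: "br (X 1) (X j) = 0" "br (X 2) (X j) = 0" using br_j j by auto
    have u2: "\<alpha> cj (X 2) = 0" using cyc[of "X 2" "X 3" "X j"] br23 bj a0 cj_def by simp
    have u1: "\<alpha> cj (X 1) = - \<alpha> Z (X j)"
      using cyc[of "X 1" "X 3" "X j"] br13 bj a0 by (simp add: cj_def eq_neg_iff_add_eq_0 add.commute)
    have Yi: "\<alpha> Y (X i) = 0" if "i \<in> {5..n}" for i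
      using cyc[of "X 1" "X 2" "X i"] br12 br_j that a0 by simp
    have Y3: "\<alpha> Y (X 3) = \<alpha> Z (X 2)" using cyc[of "X 1" "X 2" "X 3"] br12 br13 br23 a0 by simp
    have Y4: "\<alpha> Y (X 4) = - \<alpha> Z (X 1)"
      using cyc[of "X 1" "X 2" "X 4"] br12 br14 br24 a0 by (simp add: eq_neg_iff_add_eq_0)
    have Z3: "\<alpha> Z (X 3) = \<alpha> (br (X 3) (X 4)) (X 2)"
      using cyc[of "X 2" "X 3" "X 4"] br23 br24 a0 by simp
    have Zi: "\<alpha> Z (X i) = - \<alpha> (br (X 3) (X i)) (X 1)" if "i \<in> {4..n}" for i
    proof -
      have "br (X 1) (X i) = 0" using that br14 br_j by (cases "i = 4") auto
      then show ?thesis using cyc[of "X 1" "X 3" "X i"] br13 a0 by (simp add: eq_neg_iff_add_eq_0)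
    qed
    have u4: "\<alpha> cj (X 4) = \<alpha> (br (X 3) (X 4)) (X j) - \<alpha> (br (X j) (X 4)) (X 3)"
      using cyc[of "X 3" "X j" "X 4"] by (simp add: cj_def algebra_simps)
    have e: "\<alpha> (br (X j) (X 4)) (X 2) = \<alpha> Z (X j)"
      using cyc[of "X 2" "X 4" "X j"] br24 bj a0 br_anti[of "X 4" "X j"] aneg
      by (simp add: eq_neg_iff_add_eq_0)
    have Yj: "\<alpha> Y (X j) = 0" using Yi j by simp
    have N: "B (\<alpha> Z (X j)) (\<alpha> Y L') = 0" for L'
      using Sym[OF Z2 Y2, of "X j" L'] Yj B0 by simp
    have K: "B (\<alpha> Z (X j)) (\<alpha> Z L') = 0" for L'
    proof -
      have d2: "br (X 3) (X 4) \<in> lcs br 2" "br (X j) (X 4) \<in> lcs br 2" by (rule br_in_lcs2)+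
      have "B (\<alpha> Z (X j)) (\<alpha> Z L') = - B (\<alpha> cj (X 1)) (\<alpha> Z L')" using u1 Bneg1 by simp
      also have "\<dots> = - B (\<alpha> cj L') (\<alpha> Z (X 1))" using Sym[OF cj2 Z2, of "X 1" L'] by simp
      also have "\<dots> = B (\<alpha> cj L') (\<alpha> Y (X 4))" using Y4 Bneg by simp
      also have "\<dots> = B (\<alpha> cj (X 4)) (\<alpha> Y L')" using Sym[OF cj2 Y2, of L' "X 4"] by simp
      also have "\<dots> = B (\<alpha> (br (X 3) (X 4)) (X j)) (\<alpha> Y L') - B (\<alpha> (br (X j) (X 4)) (X 3)) (\<alpha> Y L')"
        using u4 Bdiff1 by simp
      also have "B (\<alpha> (br (X 3) (X 4)) (X j)) (\<alpha> Y L') = 0"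
        using Sym[OF d2(1) Y2, of "X j" L'] Yj B0 by simp
      also have "B (\<alpha> (br (X j) (X 4)) (X 3)) (\<alpha> Y L') = B (\<alpha> Z (X j)) (\<alpha> Z L')"
        using Sym[OF d2(2) Y2, of "X 3" L'] Y3 Sym[OF d2(2) Z2, of L' "X 2"] e by simp
      finally show ?thesis by simp
    qed
    have NK: "B (\<alpha> Z (X j)) (\<alpha> c L') = 0" if H: "c \<in> lcs br 2" for c L'
    proof -
      obtain a b where c: "c = a *\<^sub>R Y + b *\<^sub>R Z" using in_span[OF H] by (rule span2_elim)
      show ?thesis unfolding c using N K by (simp add: aadd ascale Badd Bscale)
    qed
    have sub: "subspace {L'. B (\<alpha> cj L) (\<alpha> c L') = 0}" for c
      unfolding subspace_def by (simp add: lin_facts[OF aR] B0 Badd Bscale)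
    have spanall: "L' \<in> span (X ` {1..n} \<union> {Y, Z})" for L' using basis_span by simp
    have GY: "B (\<alpha> cj L) (\<alpha> Y L') = 0" for L'
    proof (rule span_induct[OF spanall sub])
      fix x assume "x \<in> X ` {1..n} \<union> {Y, Z}"
      then consider (Y) "x = Y" | (Z) "x = Z" | (i) i where "i \<in> {1..n}" "x = X i" by auto
      then show "B (\<alpha> cj L) (\<alpha> Y x) = 0"
      proof cases
        case Y then show ?thesis using axx B0 by simp
      next
        case Z then show ?thesis using aYZ B0 by simp
      next
        case (i i)
        consider "i = 1" | "i = 2" | "i = 3" | "i = 4" | "i \<in> {5..n}" using i(1) by force
        then show ?thesis
        proof cases
          case 1 then show ?thesis using i Sym[OF cj2 Y2, of L "X 1"] u1 Bneg1 N by simp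
        next
          case 2 then show ?thesis using i Sym[OF cj2 Y2, of L "X 2"] u2 B0 by simp
        next
          case 3 then show ?thesis using i Y3 Sym[OF cj2 Z2, of L "X 2"] u2 B0 by simp
        next
          case 4 then show ?thesis using i Y4 Bneg Sym[OF cj2 Z2, of L "X 1"] u1 Bneg1 K by simp
        next
          case 5 then show ?thesis using i Yi B0 by simp
        qed
      qed
    qed
    have GZ: "B (\<alpha> cj L) (\<alpha> Z L') = 0" for L'
    proof (rule span_induct[OF spanall sub])
      fix x assume "x \<in> X ` {1..n} \<union> {Y, Z}"
      then consider (Y) "x = Y" | (Z) "x = Z" | (i) i where "i \<in> {1..n}" "x = X i" by auto
      then show "B (\<alpha> cj L) (\<alpha> Z x) = 0"
      proof cases
        case Y then show ?thesis using a_anti[of Z Y] aYZ B0 by simp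
      next
        case Z then show ?thesis using axx B0 by simp
      next
        case (i i)
        consider "i = 1" | "i = 2" | "i = 3" | "i \<in> {4..n}" using i(1) by force
        then show ?thesis
        proof cases
          case 1 then show ?thesis using i Sym[OF cj2 Z2, of L "X 1"] u1 Bneg1 K by simp
        next
          case 2 then show ?thesis using i Sym[OF cj2 Z2, of L "X 2"] u2 B0 by simp
        next
          case 3 then show ?thesis
            using i Z3 Sym[OF cj2 br_in_lcs2[of br "X 3" "X 4"], of L "X 2"] u2 B0 by simp
        next
          case 4 then show ?thesis
            using i Zi[OF 4] Bneg Sym[OF cj2 br_in_lcs2[of br "X 3" "X i"], of L "X 1"] u1 Bneg1 NK[OF br_in_lcs2[of br "X 3" "X i"]] by simp
        qed
      qed
    qed
    have Gen: "B (\<alpha> cj L) (\<alpha> c L') = 0" if H: "c \<in> lcs br 2" for c L'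
    proof -
      obtain a b where c: "c = a *\<^sub>R Y + b *\<^sub>R Z" using in_span[OF H] by (rule span2_elim)
      show ?thesis unfolding c using GY GZ by (simp add: aadd ascale Badd Bscale)
    qed
    have mem: "\<alpha> L cj \<in> alpha_ker br \<alpha> 1"
      unfolding alpha_ker_def one_add_one
      by (rule CollectI, rule exI[of _ "[(L, cj)]"]) (use cj2 cent in \<open>simp del: lcs.simps\<close>)
    have orthk: "B (\<alpha> L cj) w = 0" if "w \<in> alpha_ker br \<alpha> 1" for w
    proof -
      from that obtain ps where w: "w = sum_list (map (\<lambda>(L, M). \<alpha> L M) ps)"
        and ps: "\<forall>(L, M)\<in>set ps. M \<in> lcs br (1 + 1)"
        unfolding alpha_ker_def by blast
      have "\<forall>(L', M)\<in>set ps. B (\<alpha> L cj) (\<alpha> L' M) = 0"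
      proof (intro ballI, clarify)
        fix L' M assume "(L', M) \<in> set ps"
        then have M2: "M \<in> lcs br 2" using ps unfolding one_add_one by (auto simp del: lcs.simps)
        have "B (\<alpha> L cj) (\<alpha> L' M) = B (\<alpha> cj L) (\<alpha> M L')"
          using a_anti[of L cj] a_anti[of L' M] Bneg Bneg1 by simp
        then show "B (\<alpha> L cj) (\<alpha> L' M) = 0" using Gen[OF M2] by simp
      qed
      then show ?thesis unfolding w by (rule B_sum_list[OF Blin])
    qed
    have "\<alpha> L cj = 0"
      using cB mem orthk unfolding condB_def nondeg_subspace_def by blast
    then show "\<alpha> (br (X 3) (X j)) L = 0" using a_anti[of L cj] cj_def by simp
  qed
qed

end
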